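(* Let $\mathcal{A}$ be a pca and let $b\in\mathcal{A}$ satisfy $ba\simeq aa$ for all $a\in\mathcal{A}$. Then $b$ has a total extension in $\mathcal{A}$ if and only if every element of $\mathcal{A}$ has a total extension in $\mathcal{A}$.
   Context: A pca is a set $\mathcal{A}$ with partial binary application $ab$ (left associative, strict) containing $k,s$ with $kab=a$, $sab\downarrow$, $sabc\simeq ac(bc)$; $\simeq$ means both sides undefined or both defined and equal. An element $f$ is total if $fa$ is defined for all $a$; $f$ is a total extension of $b$ if $f$ is total and $ba\downarrow\Rightarrow fa=ba$ for all $a$. *)

theory Defs
  imports Main
begin

text \<open>A partial applicative structure on carrier type 'a: app a b = None means
  ab is undefined, app a b = Some c means ab is defined and equals c.
  Application of (possibly undefined) terms is strict.\<close>

definition papp :: "('a \<Rightarrow> 'a \<Rightarrow> 'a option) \<Rightarrow> 'a option \<Rightarrow> 'a option \<Rightarrow> 'a option" where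
  "papp app x y = Option.bind x (\<lambda>a. Option.bind y (\<lambda>b. app a b))"

text \<open>Partial combinatory algebra: there are k, s with kab = a, sab defined,
  sabc \<simeq> ac(bc). Kleene equality \<simeq> is HOL equality on options.\<close>
definition is_pca :: "('a \<Rightarrow> 'a \<Rightarrow> 'a option) \<Rightarrow> bool" where
  "is_pca app \<longleftrightarrow> (\<exists>k s.
     (\<forall>a b. papp app (papp app (Some k) (Some a)) (Some b) = Some a) \<and>
     (\<forall>a b. papp app (papp app (Some s) (Some a)) (Some b) \<noteq> None) \<and>
     (\<forall>a b c. papp app (papp app (papp app (Some s) (Some a)) (Some b)) (Some c)
              = papp app (papp app (Some a) (Some c)) (papp app (Some b) (Some c))))"

definition total_elem :: "('a \<Rightarrow> 'a \<Rightarrow> 'a option) \<Rightarrow> 'a \<Rightarrow> bool" where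
  "total_elem app f \<longleftrightarrow> (\<forall>a. app f a \<noteq> None)"

definition total_extension :: "('a \<Rightarrow> 'a \<Rightarrow> 'a option) \<Rightarrow> 'a \<Rightarrow> 'a \<Rightarrow> bool" where
  "total_extension app f b \<longleftrightarrow> total_elem app f \<and>
     (\<forall>a. app b a \<noteq> None \<longrightarrow> app f a = app b a)"

end

theory Submission
  imports Defs
begin

lemma pca_KS:
  assumes "is_pca app"
  shows "\<exists>k K s Sa S. (\<forall>a. app k a = Some (K a)) \<and> (\<forall>a. app s a = Some (Sa a)) \<and> (\<forall>a b. app (Sa a) b = Some (S a b)) \<and> (\<forall>a b. app (K a) b = Some a) \<and>
     (\<forall>a b c. app (S a b) c = Option.bind (app a c) (\<lambda>u. Option.bind (app b c) (\<lambda>v. app u v)))"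
proof -
  obtain k s where k: "\<forall>a b. papp app (papp app (Some k) (Some a)) (Some b) = Some a"
    and s1: "\<forall>a b. papp app (papp app (Some s) (Some a)) (Some b) \<noteq> None"
    and s2: "\<forall>a b c. papp app (papp app (papp app (Some s) (Some a)) (Some b)) (Some c)
              = papp app (papp app (Some a) (Some c)) (papp app (Some b) (Some c))"
    using assms unfolding is_pca_def by blast
  have "\<forall>a. \<exists>x. app k a = Some x \<and> (\<forall>b. app x b = Some a)"
  proof
    fix a
    show "\<exists>x. app k a = Some x \<and> (\<forall>b. app x b = Some a)"
      using k[rule_format, of a] by (cases "app k a") (auto simp: papp_def)
  qed
  then obtain K where K: "\<forall>a b. app (K a) b = Some a" and K0: "\<forall>a. app k a = Some (K a)" by metis
  have "\<forall>a. \<exists>sa. app s a = Some sa"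
    using s1 by (metis bind.bind_lunit bind_eq_None_conv not_None_eq papp_def)
  then obtain Sa where Sa: "\<forall>a. app s a = Some (Sa a)" by metis
  have "\<forall>a b. \<exists>x. app (Sa a) b = Some x \<and> (\<forall>c. app x c = Option.bind (app a c) (\<lambda>u. Option.bind (app b c) (\<lambda>v. app u v)))"
  proof (intro allI)
    fix a b
    obtain sa where sa: "app s a = Some sa" using s1[rule_format, of a b]
      by (cases "app s a") (auto simp: papp_def)
    obtain sab where sab: "app sa b = Some sab" using s1[rule_format, of a b] sa
      by (cases "app sa b") (auto simp: papp_def)
    have "Sa a = sa" using sa Sa by simp
    then show "\<exists>x. app (Sa a) b = Some x \<and> (\<forall>c. app x c = Option.bind (app a c) (\<lambda>u. Option.bind (app b c) (\<lambda>v. app u v)))"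
    proof (intro exI[of _ sab] conjI allI)
      fix c
      show "app (Sa a) b = Some sab" using sab \<open>Sa a = sa\<close> by simp
      show "app sab c = Option.bind (app a c) (\<lambda>u. Option.bind (app b c) (\<lambda>v. app u v))"
        using s2[rule_format, of a b c] sa sab by (simp add: papp_def)
    qed
  qed
  then obtain S where "\<forall>a b. app (Sa a) b = Some (S a b)" "\<forall>a b c. app (S a b) c = Option.bind (app a c) (\<lambda>u. Option.bind (app b c) (\<lambda>v. app u v))"
    by metis
  with K K0 Sa show ?thesis by blast
qed

theorem mainTheorem14:
  fixes app :: "'a \<Rightarrow> 'a \<Rightarrow> 'a option" and b :: 'a
  assumes "is_pca app"
    and "\<forall>a. app b a = app a a"
  shows "(\<exists>f. total_extension app f b) \<longleftrightarrow> (\<forall>c. \<exists>f. total_extension app f c)"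
proof
  assume "\<exists>f. total_extension app f b"
  then obtain f where ft: "\<forall>a. app f a \<noteq> None" and fe: "\<forall>a. app b a \<noteq> None \<longrightarrow> app f a = app b a"
    unfolding total_extension_def total_elem_def by blast
  obtain k K s Sa S where k: "\<forall>a. app k a = Some (K a)" and Sa: "\<forall>a. app s a = Some (Sa a)"
    and Sab: "\<forall>a b. app (Sa a) b = Some (S a b)" and K: "\<forall>a b. app (K a) b = Some a" and
    S: "\<forall>a b c. app (S a b) c = Option.bind (app a c) (\<lambda>u. Option.bind (app b c) (\<lambda>v. app u v))"
    using pca_KS[OF assms(1)] by blast
  show "\<forall>c. \<exists>f. total_extension app f c"
  proof
    fix c
    define F where "F = S (K f) (S (K (Sa (K c))) k)"
    have hy: "app (S (K (Sa (K c))) k) y = Some (S (K c) (K y))" for y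
      using S K k Sab by simp
    have ay: "app (S (K c) (K y)) x = app c y" for x y
      using S K by (cases "app c y") auto
    have Fy: "app F y = app f (S (K c) (K y))" for y
      using S K hy unfolding F_def by simp
    show "\<exists>f. total_extension app f c"
    proof (intro exI[of _ F])
      show "total_extension app F c"
        unfolding total_extension_def total_elem_def
      proof (intro conjI allI impI)
        fix y show "app F y \<noteq> None" using Fy ft by simp
      next
        fix y assume "app c y \<noteq> None"
        then show "app F y = app c y" using Fy fe assms(2) ay by metis
      qed
    qed
  qed
qed (auto)

end
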